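(* Let $(\mathbf{S}^1, A^1, U^1, \mathbf{S}^2,\ldots)$ be a process as in the context satisfying (A0) and (C1)–(C3), and let $\phi:\mathcal{S}\to\mathbb{R}^q$ be measurable, with $\mathbf{S}^t_\phi=\phi(\mathbf{S}^t)$ and $\mathbf{Y}^{t+1}=(U^t,(\mathbf{S}^{t+1})^\top)^\top$. Fix $t$ and suppose at least one of the following holds: (i) $\{\mathbf{Y}^{t+1}-\mathbb{E}(\mathbf{Y}^{t+1}\mid\mathbf{S}^t_\phi,A^t)\}\perp\!\!\!\perp\mathbf{S}^t\mid A^t$; (ii) $\{\mathbf{S}^t-\mathbb{E}(\mathbf{S}^t\mid\mathbf{S}^t_\phi)\}\perp\!\!\!\perp(\mathbf{Y}^{t+1},\mathbf{S}^t_\phi)\mid A^t$. Then $\mathbf{Y}^{t+1}\perp\!\!\!\perp\mathbf{S}^t\mid\mathbf{S}^t_\phi,A^t$.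
   Context: The process: $\mathbf{S}^t\in\mathcal{S}\subseteq\mathbb{R}^p$ are states, $A^t\in\mathcal{A}=\{1,\ldots,K\}$ decisions, and $U^t=U(\mathbf{S}^t,A^t,\mathbf{S}^{t+1})$ for a fixed deterministic measurable function $U$ with $\sup_t|U^t|\le M$ a.s. (so all conditional expectations above exist; the state $\mathbf{S}^t$ is assumed integrable). (A0): $P(\mathbf{S}^{t+1}\in\mathcal{G}\mid A^t,\mathbf{S}^t,\ldots,A^1,\mathbf{S}^1)=P(\mathbf{S}^{t+1}\in\mathcal{G}\mid A^t,\mathbf{S}^t)$ for all measurable $\mathcal{G}$, with the kernel independent of $t$. (C1)–(C3) are consistency, positivity and sequential ignorability of the potential-outcome model: (C1) $\mathbf{S}^t=\mathbf{S}^{*t}(A^1,\ldots,A^{t-1})$ where $\mathbf{S}^{*t}(\overline{\mathbf{a}}^{t-1})$ are potential states; (C2) $P(A^t=a\mid \mathbf{S}^1,\ldots,\mathbf{S}^t,A^1,\ldots,A^{t-1})\ge\epsilon>0$ a.s. for all $a$; (C3) the collection of all potential states is independent of $A^t$ given $(\mathbf{S}^1,\ldots,\mathbf{S}^t,A^1,\ldots,A^{t-1})$. *)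

theory Defs
  imports "HOL-Analysis.Analysis" "HOL-Probability.Probability"
begin

definition cond_exp_vec ::
  "'w measure \<Rightarrow> 'w measure \<Rightarrow> ('w \<Rightarrow> 'v::euclidean_space) \<Rightarrow> 'w \<Rightarrow> 'v" where
  "cond_exp_vec M F X = (\<lambda>\<omega>. \<Sum>b\<in>Basis. real_cond_exp M F (\<lambda>\<eta>. X \<eta> \<bullet> b) \<omega> *\<^sub>R b)"

definition cond_indep ::
  "'w measure \<Rightarrow> 'w measure \<Rightarrow> ('w \<Rightarrow> 'x) \<Rightarrow> 'x measure \<Rightarrow> ('w \<Rightarrow> 'y) \<Rightarrow> 'y measure \<Rightarrow> bool" where
  "cond_indep M F X MX Y MY \<longleftrightarrow>
     (\<forall>A\<in>sets MX. \<forall>B\<in>sets MY. AE \<omega> in M.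
        real_cond_exp M F (\<lambda>\<eta>. indicator A (X \<eta>) * indicator B (Y \<eta>)) \<omega> =
        real_cond_exp M F (\<lambda>\<eta>. indicator A (X \<eta>)) \<omega> * real_cond_exp M F (\<lambda>\<eta>. indicator B (Y \<eta>)) \<omega>)"

definition gen_sigma :: "'w measure \<Rightarrow> ('w \<Rightarrow> 'z) \<Rightarrow> 'z measure \<Rightarrow> 'w measure" where
  "gen_sigma M Z MZ = vimage_algebra (space M) Z MZ"

definition hist_sigma ::
  "'w measure \<Rightarrow> (nat \<Rightarrow> 'w \<Rightarrow> real^'p) \<Rightarrow> (nat \<Rightarrow> 'w \<Rightarrow> nat) \<Rightarrow> nat \<Rightarrow> nat \<Rightarrow> 'w measure" where
  "hist_sigma M S A n m =
     gen_sigma M (\<lambda>\<omega>. (\<lambda>i\<in>{1..n}. S i \<omega>, \<lambda>j\<in>{1..m}. A j \<omega>))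
       (Pi\<^sub>M {1..n} (\<lambda>_. borel) \<Otimes>\<^sub>M Pi\<^sub>M {1..m} (\<lambda>_. count_space UNIV))"

text \<open>Index set of all potential states S*^s(abar), abar \<in> {1..K}^(s-1).\<close>
definition pot_index :: "nat \<Rightarrow> (nat \<times> nat list) set" where
  "pot_index K = {(s, abar). 1 \<le> s \<and> length abar = s - 1 \<and> set abar \<subseteq> {1..K}}"

end

theory Submission
  imports Defs
begin


lemma sfs:
  assumes "prob_space M" "subalgebra M F"
  shows "sigma_finite_subalgebra M F"
proof -
  interpret prob_space M by fact
  have "finite_measure_subalgebra M F"
    by (simp add: assms(2) finite_measure_axioms finite_measure_subalgebra.intro finite_measure_subalgebra_axioms.intro)
  then show ?thesis by (rule finite_measure_subalgebra_is_sigma_finite)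
qed

lemma gen_sigma_space: "space (gen_sigma M T MT) = space M"
  unfolding gen_sigma_def by simp

lemma gen_sigma_sets:
  assumes "T \<in> measurable M MT"
  shows "sets (gen_sigma M T MT) = {T -` B \<inter> space M | B. B \<in> sets MT}"
  unfolding gen_sigma_def using assms by (intro sets_vimage_algebra2) (auto simp: measurable_def)

lemma gen_sigma_subalg:
  assumes "T \<in> measurable M MT"
  shows "subalgebra M (gen_sigma M T MT)"
  unfolding subalgebra_def using assms by (auto simp: gen_sigma_space gen_sigma_sets)

lemma gen_sigma_meas:
  assumes "T \<in> measurable M MT"
  shows "T \<in> measurable (gen_sigma M T MT) MT"
  unfolding gen_sigma_def using assms by (intro measurable_vimage_algebra1) (auto simp: measurable_def)

lemma gen_sigma_le:
  assumes "T \<in> measurable M MT" "T \<in> measurable N MT" "space N = space M"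
  shows "sets (gen_sigma M T MT) \<subseteq> sets N"
  using assms by (auto simp: gen_sigma_sets dest: measurable_sets)

definition joinsig :: "'w measure \<Rightarrow> ('w \<Rightarrow> 'x) \<Rightarrow> 'x measure \<Rightarrow> 'w measure \<Rightarrow> 'w measure" where
  "joinsig M X MX F = sigma (space M) {X -` A \<inter> E | A E. A \<in> sets MX \<and> E \<in> sets F}"

context
  fixes M F :: "'w measure" and X :: "'w \<Rightarrow> 'x" and MX
  assumes sub: "subalgebra M F" and Xm: "X \<in> measurable M MX"
begin

lemma gen_pow: "{X -` A \<inter> E | A E. A \<in> sets MX \<and> E \<in> sets F} \<subseteq> Pow (space M)"
  using sub sets.sets_into_space[of _ F] by (auto simp: subalgebra_def)

lemma gen_sets: "{X -` A \<inter> E | A E. A \<in> sets MX \<and> E \<in> sets F} \<subseteq> sets M"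
proof safe
  fix A E assume "A \<in> sets MX" "E \<in> sets F"
  then have "E \<in> sets M" "E \<subseteq> space M" using sub sets.sets_into_space[of E F] by (auto simp: subalgebra_def)
  then have "X -` A \<inter> E = (X -` A \<inter> space M) \<inter> E" by auto
  then show "X -` A \<inter> E \<in> sets M" using \<open>A \<in> sets MX\<close> \<open>E \<in> sets M\<close> Xm by (auto intro: measurable_sets)
qed

lemma joinsig_space: "space (joinsig M X MX F) = space M"
  unfolding joinsig_def using gen_pow by simp

lemma joinsig_sets: "sets (joinsig M X MX F) = sigma_sets (space M) {X -` A \<inter> E | A E. A \<in> sets MX \<and> E \<in> sets F}"
  unfolding joinsig_def using gen_pow by simp

lemma joinsig_gen: "{X -` A \<inter> E | A E. A \<in> sets MX \<and> E \<in> sets F} \<subseteq> sets (joinsig M X MX F)"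
  unfolding joinsig_sets by auto

lemma joinsig_subalg: "subalgebra M (joinsig M X MX F)"
  unfolding subalgebra_def joinsig_space joinsig_sets
  using gen_sets by (simp add: sets.sigma_sets_subset)

lemma joinsig_F: "sets F \<subseteq> sets (joinsig M X MX F)"
proof
  fix E assume E: "E \<in> sets F"
  then have "E \<subseteq> space M" using sub sets.sets_into_space[of E F] by (auto simp: subalgebra_def)
  then have "E = X -` space MX \<inter> E" using Xm by (auto simp: measurable_def)
  then show "E \<in> sets (joinsig M X MX F)" using joinsig_gen E by blast
qed

lemma joinsig_subalg_F: "subalgebra (joinsig M X MX F) F"
  using joinsig_F sub by (simp add: subalgebra_def joinsig_space)

lemma joinsig_X: "X \<in> measurable (joinsig M X MX F) MX"
proof (rule measurableI)
  show "x \<in> space (joinsig M X MX F) \<Longrightarrow> X x \<in> space MX" for x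
    using Xm by (auto simp: joinsig_space measurable_def)
  fix A assume "A \<in> sets MX"
  moreover have "space M \<in> sets F" using sub by (metis sets.top subalgebra_def)
  ultimately show "X -` A \<inter> space (joinsig M X MX F) \<in> sets (joinsig M X MX F)"
    using joinsig_gen by (auto simp: joinsig_space)
qed

end

lemma joinsig_le:
  assumes "subalgebra M H" "Y \<in> measurable M MY" "Y \<in> measurable N MY" "space N = space M"
    "sets H \<subseteq> sets N"
  shows "sets (joinsig M Y MY H) \<subseteq> sets N"
proof -
  have "{Y -` A \<inter> E | A E. A \<in> sets MY \<and> E \<in> sets H} \<subseteq> sets N"
  proof safe
    fix A E assume "A \<in> sets MY" "E \<in> sets H"
    then have "E \<subseteq> space M" using assms(1) sets.sets_into_space[of E H] by (auto simp: subalgebra_def)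
    then have "Y -` A \<inter> E = (Y -` A \<inter> space N) \<inter> E" using assms(4) by auto
    then show "Y -` A \<inter> E \<in> sets N" using \<open>A \<in> sets MY\<close> \<open>E \<in> sets H\<close> assms(3,5)
      by (auto intro!: measurable_sets)
  qed
  then have "sigma_sets (space N) {Y -` A \<inter> E | A E. A \<in> sets MY \<and> E \<in> sets H} \<subseteq> sets N"
    by (rule sets.sigma_sets_subset)
  then show ?thesis using joinsig_sets[OF assms(1,2)] assms(4) by simp
qed



lemma set_integral_eq_sigma:
  fixes f g :: "'a \<Rightarrow> real"
  assumes IS: "Int_stable G" and GP: "G \<subseteq> Pow (space M)" and top: "space M \<in> G" and GM: "G \<subseteq> sets M"
    and fi: "integrable M f" and gi: "integrable M g"
    and eqG: "\<And>E. E \<in> G \<Longrightarrow> (\<integral>x\<in>E. f x \<partial>M) = (\<integral>x\<in>E. g x \<partial>M)"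
    and E: "E \<in> sigma_sets (space M) G"
  shows "(\<integral>x\<in>E. f x \<partial>M) = (\<integral>x\<in>E. g x \<partial>M)"
proof -
  have SM: "sigma_sets (space M) G \<subseteq> sets M" using GM by (simp add: sets.sigma_sets_subset)
  have whole: "integral\<^sup>L M f = integral\<^sup>L M g"
    using eqG[OF top] set_integral_space[OF fi] set_integral_space[OF gi] by simp
  from IS GP E show ?thesis
  proof (induction rule: sigma_sets_induct_disjoint)
    case (basic A) then show ?case by (rule eqG)
  next
    case empty then show ?case by (simp add: set_lebesgue_integral_def)
  next
    case (compl A)
    have A: "A \<in> sets M" using compl SM by auto
    have d: "(\<integral>x\<in>space M - A. h x \<partial>M) = integral\<^sup>L M h - (\<integral>x\<in>A. h x \<partial>M)"
      if hi: "integrable M h" for h :: "'a \<Rightarrow> real"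
    proof -
      have "(\<integral>x\<in>space M - A. h x \<partial>M) = (\<integral>x. h x - indicator A x * h x \<partial>M)"
        unfolding set_lebesgue_integral_def
        by (rule Bochner_Integration.integral_cong) (auto simp: indicator_def)
      also have "\<dots> = integral\<^sup>L M h - (\<integral>x. indicator A x * h x \<partial>M)"
        using hi integrable_mult_indicator[OF A hi] by (intro Bochner_Integration.integral_diff) auto
      finally show ?thesis by (simp add: set_lebesgue_integral_def)
    qed
    show ?case using d[OF fi] d[OF gi] compl.IH whole by simp
  next
    case (union A)
    have A: "\<And>i. A i \<in> sets M" using union SM by auto
    have dj: "\<And>i j. i \<noteq> j \<Longrightarrow> A i \<inter> A j = {}" using union(1) by (auto simp: disjoint_family_on_def)
    have U: "(\<Union>i. A i) \<in> sets M" using A by auto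
    have sif: "set_integrable M (\<Union>i. A i) f" unfolding set_integrable_def by (rule integrable_mult_indicator[OF U fi])
    have sig: "set_integrable M (\<Union>i. A i) g" unfolding set_integrable_def by (rule integrable_mult_indicator[OF U gi])
    have "(\<integral>x\<in>(\<Union>i. A i). f x \<partial>M) = (\<Sum>i. (\<integral>x\<in>A i. f x \<partial>M))"
      by (rule lebesgue_integral_countable_add[OF A _ sif]) (rule dj)
    also have "\<dots> = (\<Sum>i. (\<integral>x\<in>A i. g x \<partial>M))" using union.IH by simp
    also have "\<dots> = (\<integral>x\<in>(\<Union>i. A i). g x \<partial>M)"
      by (rule lebesgue_integral_countable_add[OF A _ sig, symmetric]) (rule dj)
    finally show ?case .
  qed
qed

lemma int_bdd:
  fixes q h :: "'a \<Rightarrow> real"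
  assumes "integrable M q" "h \<in> borel_measurable M" "AE x in M. \<bar>h x\<bar> \<le> 1"
  shows "integrable M (\<lambda>x. h x * q x)"
proof (rule Bochner_Integration.integrable_bound[OF assms(1)])
  show "(\<lambda>x. h x * q x) \<in> borel_measurable M" using borel_measurable_integrable[OF assms(1)] assms(2) by simp
  show "AE x in M. norm (h x * q x) \<le> norm (q x)"
    using assms(3) by eventually_elim (metis abs_ge_zero abs_mult mult_left_le_one_le real_norm_def)
qed

lemma ind_bdd: "\<bar>indicator A x * indicator B y\<bar> \<le> (1::real)"
  by (simp add: indicator_def)



lemma char1:
  assumes prob: "prob_space M" and Xm[measurable]: "X \<in> measurable M MX" and Zm[measurable]: "Z \<in> measurable M MZ"
    and sub: "subalgebra M F" and ci: "cond_indep M F X MX Z MZ" and B[measurable]: "B \<in> sets MZ"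
  shows "AE \<omega> in M. real_cond_exp M (joinsig M X MX F) (\<lambda>\<eta>. indicator B (Z \<eta>)) \<omega>
                  = real_cond_exp M F (\<lambda>\<eta>. indicator B (Z \<eta>)) \<omega>"
proof -
  interpret prob_space M by fact
  let ?J = "joinsig M X MX F"
  let ?G = "{X -` A \<inter> E | A E. A \<in> sets MX \<and> E \<in> sets F}"
  have subJ: "subalgebra M ?J" by (rule joinsig_subalg[OF sub Xm])
  interpret J: sigma_finite_subalgebra M ?J by (rule sfs[OF prob subJ])
  interpret F: sigma_finite_subalgebra M F by (rule sfs[OF prob sub])
  define f where "f = (\<lambda>\<eta>. indicator B (Z \<eta>) :: real)"
  define q where "q = real_cond_exp M F f"
  have fm[measurable]: "f \<in> borel_measurable M" unfolding f_def by measurable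
  have fi: "integrable M f" by (rule integrable_const_bound[where B=1]) (auto simp: f_def)
  have qi: "integrable M q" unfolding q_def by (rule F.real_cond_exp_int(1)[OF fi])
  have qF[measurable]: "q \<in> borel_measurable F" unfolding q_def by simp
  have qJ: "q \<in> borel_measurable ?J" by (rule measurable_from_subalg[OF joinsig_subalg_F[OF sub Xm] qF])
  have qM[measurable]: "q \<in> borel_measurable M" by (rule measurable_from_subalg[OF sub qF])
  have topF: "space M \<in> sets F" using sub by (metis sets.top subalgebra_def)
  have "AE \<omega> in M. real_cond_exp M ?J f \<omega> = q \<omega>"
  proof (rule J.real_cond_exp_charact[OF _ fi qi qJ])
    fix E assume "E \<in> sets ?J"
    then have E: "E \<in> sigma_sets (space M) ?G" by (simp add: joinsig_sets[OF sub Xm])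
    show "(\<integral>x\<in>E. f x \<partial>M) = (\<integral>x\<in>E. q x \<partial>M)"
    proof (rule set_integral_eq_sigma[OF _ gen_pow[OF sub Xm] _ gen_sets[OF sub Xm] fi qi _ E])
      show "Int_stable ?G"
      proof (rule Int_stableI)
        fix a b assume "a \<in> ?G" "b \<in> ?G"
        then obtain A1 E1 A2 E2 where "A1 \<in> sets MX" "E1 \<in> sets F" "a = X -` A1 \<inter> E1"
          "A2 \<in> sets MX" "E2 \<in> sets F" "b = X -` A2 \<inter> E2" by blast
        then have "a \<inter> b = X -` (A1 \<inter> A2) \<inter> (E1 \<inter> E2)" "A1 \<inter> A2 \<in> sets MX" "E1 \<inter> E2 \<in> sets F" by auto
        then show "a \<inter> b \<in> ?G" by blast
      qed
      have "space M = X -` space MX \<inter> space M" using Xm by (auto simp: measurable_def)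
      then show "space M \<in> ?G" using topF by blast
      fix E' assume "E' \<in> ?G"
      then obtain A E0 where A[measurable]: "A \<in> sets MX" and E0: "E0 \<in> sets F" and E'eq: "E' = X -` A \<inter> E0" by auto
      have E0M[measurable]: "E0 \<in> sets M" using sub E0 by (auto simp: subalgebra_def)
      have E0F[measurable]: "E0 \<in> sets F" by (rule E0)
      define p where "p = real_cond_exp M F (\<lambda>\<eta>. indicator A (X \<eta>) :: real)"
      have pM[measurable]: "p \<in> borel_measurable M" unfolding p_def by simp
      have AB: "AE \<omega> in M. real_cond_exp M F (\<lambda>\<eta>. indicator A (X \<eta>) * indicator B (Z \<eta>)) \<omega> = p \<omega> * q \<omega>"
        using ci A B unfolding cond_indep_def p_def q_def f_def by auto
      have ind: "\<And>x. indicator E' x = indicator E0 x * (indicator A (X x)::real)" by (simp add: E'eq split: split_indicator)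
      have iAB: "integrable M (\<lambda>\<eta>. indicator A (X \<eta>) * indicator B (Z \<eta>) :: real)"
        by (rule integrable_const_bound[where B=1]) (auto simp: indicator_def)
      have iq: "integrable M (\<lambda>x. (indicator E0 x * q x) * indicator A (X x))"
      proof -
        have "integrable M (\<lambda>x. (indicator E0 x * indicator A (X x)) * q x)"
          by (rule int_bdd[OF qi]) (auto simp: indicator_def)
        then show ?thesis by (simp add: ac_simps)
      qed
      have "(\<integral>x\<in>E'. f x \<partial>M) = (\<integral>x\<in>E0. indicator A (X x) * indicator B (Z x) \<partial>M)"
        unfolding set_lebesgue_integral_def by (rule Bochner_Integration.integral_cong) (auto simp: ind f_def)
      also have "\<dots> = (\<integral>x\<in>E0. real_cond_exp M F (\<lambda>\<eta>. indicator A (X \<eta>) * indicator B (Z \<eta>)) x \<partial>M)"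
        by (rule F.real_cond_exp_intA[OF iAB E0])
      also have "\<dots> = (\<integral>x\<in>E0. p x * q x \<partial>M)"
        unfolding set_lebesgue_integral_def
        by (rule integral_cong_AE) (use AB in auto)
      also have "\<dots> = (\<integral>x. (indicator E0 x * q x) * p x \<partial>M)"
        unfolding set_lebesgue_integral_def by (simp add: ac_simps)
      also have "\<dots> = (\<integral>x. (indicator E0 x * q x) * indicator A (X x) \<partial>M)" unfolding p_def
        by (rule F.real_cond_exp_intg(2)[OF iq]; measurable)
      also have "\<dots> = (\<integral>x\<in>E'. q x \<partial>M)"
        unfolding set_lebesgue_integral_def by (rule Bochner_Integration.integral_cong) (auto simp: ind)
      finally show "(\<integral>x\<in>E'. f x \<partial>M) = (\<integral>x\<in>E'. q x \<partial>M)" .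
    qed
  qed
  then show ?thesis by (simp add: f_def q_def)
qed

lemma char2:
  assumes prob: "prob_space M" and Xm[measurable]: "X \<in> measurable M MX" and Zm[measurable]: "Z \<in> measurable M MZ"
    and sub: "subalgebra M F"
    and h: "\<forall>B\<in>sets MZ. AE \<omega> in M. real_cond_exp M (joinsig M X MX F) (\<lambda>\<eta>. indicator B (Z \<eta>)) \<omega>
                  = real_cond_exp M F (\<lambda>\<eta>. indicator B (Z \<eta>)) \<omega>"
  shows "cond_indep M F X MX Z MZ"
  unfolding cond_indep_def
proof (intro ballI)
  interpret prob_space M by fact
  let ?J = "joinsig M X MX F"
  have subJ: "subalgebra M ?J" by (rule joinsig_subalg[OF sub Xm])
  interpret J: sigma_finite_subalgebra M ?J by (rule sfs[OF prob subJ])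
  interpret F: sigma_finite_subalgebra M F by (rule sfs[OF prob sub])
  have XJ[measurable]: "X \<in> measurable ?J MX" by (rule joinsig_X[OF sub Xm])
  fix A B assume A[measurable]: "A \<in> sets MX" and B[measurable]: "B \<in> sets MZ"
  define f where "f = (\<lambda>\<eta>. indicator B (Z \<eta>) :: real)"
  define q where "q = real_cond_exp M F f"
  define p where "p = real_cond_exp M F (\<lambda>\<eta>. indicator A (X \<eta>) :: real)"
  have fm[measurable]: "f \<in> borel_measurable M" unfolding f_def by measurable
  have fi: "integrable M f" by (rule integrable_const_bound[where B=1]) (auto simp: f_def)
  have qi: "integrable M q" unfolding q_def by (rule F.real_cond_exp_int(1)[OF fi])
  have qF[measurable]: "q \<in> borel_measurable F" unfolding q_def by simp
  have qM[measurable]: "q \<in> borel_measurable M" by (rule measurable_from_subalg[OF sub qF])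
  have pF[measurable]: "p \<in> borel_measurable F" unfolding p_def by simp
  have pM[measurable]: "p \<in> borel_measurable M" by (rule measurable_from_subalg[OF sub pF])
  have ai: "integrable M (\<lambda>\<eta>. indicator A (X \<eta>) :: real)" by (rule integrable_const_bound[where B=1]) auto
  have p1: "AE x in M. p x \<le> 1" unfolding p_def by (rule F.real_cond_exp_le_c[OF ai]) auto
  have p0: "AE x in M. p x \<ge> 0" unfolding p_def by (rule F.real_cond_exp_ge_c[OF ai]) auto
  have pb: "AE x in M. \<bar>p x\<bar> \<le> 1" using p0 p1 by eventually_elim auto
  have pqi: "integrable M (\<lambda>x. p x * q x)" by (rule int_bdd[OF qi pM pb])
  have pqF: "(\<lambda>x. p x * q x) \<in> borel_measurable F" by measurable
  have iAB: "integrable M (\<lambda>\<eta>. indicator A (X \<eta>) * indicator B (Z \<eta>) :: real)"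
    by (rule integrable_const_bound[where B=1]) (auto simp: indicator_def)
  have hB: "AE x in M. real_cond_exp M ?J f x = q x" using h B unfolding f_def q_def by auto
  have "AE \<omega> in M. real_cond_exp M F (\<lambda>\<eta>. indicator A (X \<eta>) * indicator B (Z \<eta>)) \<omega> = p \<omega> * q \<omega>"
  proof (rule F.real_cond_exp_charact[OF _ iAB pqi pqF])
    fix E assume E[measurable]: "E \<in> sets F"
    have EM[measurable]: "E \<in> sets M" using sub E by (auto simp: subalgebra_def)
    have EJ[measurable]: "E \<in> sets ?J" using joinsig_F[OF sub Xm] E by auto
    have hJ: "(\<lambda>x. indicator E x * indicator A (X x) :: real) \<in> borel_measurable ?J" by measurable
    have i1: "integrable M (\<lambda>x. (indicator E x * indicator A (X x)) * f x)"
      by (rule integrable_const_bound[where B=1]) (auto simp: f_def indicator_def)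
    have i2: "integrable M (\<lambda>x. (indicator E x * q x) * indicator A (X x))"
    proof -
      have "integrable M (\<lambda>x. (indicator E x * indicator A (X x)) * q x)"
        by (rule int_bdd[OF qi]) (auto simp: indicator_def)
      then show ?thesis by (simp add: ac_simps)
    qed
    have "(\<integral>x\<in>E. indicator A (X x) * indicator B (Z x) \<partial>M) = (\<integral>x. (indicator E x * indicator A (X x)) * f x \<partial>M)"
      unfolding set_lebesgue_integral_def f_def by (simp add: ac_simps)
    also have "\<dots> = (\<integral>x. (indicator E x * indicator A (X x)) * real_cond_exp M ?J f x \<partial>M)"
      by (rule J.real_cond_exp_intg(2)[OF i1 hJ fm, symmetric])
    also have "\<dots> = (\<integral>x. (indicator E x * indicator A (X x)) * q x \<partial>M)"
      by (rule integral_cong_AE) (use hB in auto)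
    also have "\<dots> = (\<integral>x. (indicator E x * q x) * indicator A (X x) \<partial>M)" by (simp add: ac_simps)
    also have "\<dots> = (\<integral>x. (indicator E x * q x) * p x \<partial>M)" unfolding p_def
      by (rule F.real_cond_exp_intg(2)[OF i2, symmetric]; measurable)
    also have "\<dots> = (\<integral>x\<in>E. p x * q x \<partial>M)"
      unfolding set_lebesgue_integral_def by (simp add: ac_simps)
    finally show "(\<integral>x\<in>E. indicator A (X x) * indicator B (Z x) \<partial>M) = (\<integral>x\<in>E. p x * q x \<partial>M)" .
  qed
  then show "AE \<omega> in M. real_cond_exp M F (\<lambda>\<eta>. indicator A (X \<eta>) * indicator B (Z \<eta>)) \<omega> =
        real_cond_exp M F (\<lambda>\<eta>. indicator A (X \<eta>)) \<omega> * real_cond_exp M F (\<lambda>\<eta>. indicator B (Z \<eta>)) \<omega>"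
    by (simp add: p_def q_def f_def)
qed



lemma ci_sym:
  assumes "cond_indep M F X MX Z MZ"
  shows "cond_indep M F Z MZ X MX"
  using assms unfolding cond_indep_def by (auto simp: mult.commute)

lemma ci_decomp:
  assumes ci: "cond_indep M F X MX Z MZ" and g: "g \<in> measurable MZ MZ'" and sp: "space MZ = UNIV"
  shows "cond_indep M F X MX (\<lambda>\<omega>. g (Z \<omega>)) MZ'"
  unfolding cond_indep_def
proof (intro ballI)
  fix A B assume A: "A \<in> sets MX" and B: "B \<in> sets MZ'"
  have "g -` B \<inter> space MZ \<in> sets MZ" using g B by (rule measurable_sets)
  then have gB: "g -` B \<in> sets MZ" using sp by simp
  show "AE \<omega> in M. real_cond_exp M F (\<lambda>\<eta>. indicator A (X \<eta>) * indicator B (g (Z \<eta>))) \<omega> =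
        real_cond_exp M F (\<lambda>\<eta>. indicator A (X \<eta>)) \<omega> * real_cond_exp M F (\<lambda>\<eta>. indicator B (g (Z \<eta>))) \<omega>"
  proof -
    have "AE \<omega> in M. real_cond_exp M F (\<lambda>\<eta>. indicator A (X \<eta>) * indicator (g -` B) (Z \<eta>)) \<omega> =
        real_cond_exp M F (\<lambda>\<eta>. indicator A (X \<eta>)) \<omega> * real_cond_exp M F (\<lambda>\<eta>. indicator (g -` B) (Z \<eta>)) \<omega>"
      using ci A gB unfolding cond_indep_def by blast
    then show ?thesis by (simp only: indicator_vimage)
  qed
qed

lemma ci_weak_union:
  assumes prob: "prob_space M" and Xm[measurable]: "X \<in> measurable M MX" and Zm[measurable]: "Z \<in> measurable M MZ"
    and subF: "subalgebra M F" and subH: "subalgebra M H" and FH: "sets F \<subseteq> sets H"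
    and HJ: "sets H \<subseteq> sets (joinsig M Z MZ F)"
    and ci: "cond_indep M F X MX Z MZ"
  shows "cond_indep M H X MX Z MZ"
proof -
  interpret prob_space M by fact
  have ci': "cond_indep M F Z MZ X MX" by (rule ci_sym[OF ci])
  let ?J1 = "joinsig M Z MZ F" and ?J2 = "joinsig M Z MZ H"
  have subJ1: "subalgebra M ?J1" by (rule joinsig_subalg[OF subF Zm])
  have subJ2: "subalgebra M ?J2" by (rule joinsig_subalg[OF subH Zm])
  have J21: "sets ?J2 \<subseteq> sets ?J1"
    by (rule joinsig_le[OF subH Zm joinsig_X[OF subF Zm] joinsig_space[OF subF Zm] HJ])
  have subJ1J2: "subalgebra ?J1 ?J2" using J21
    by (simp add: subalgebra_def joinsig_space[OF subF Zm] joinsig_space[OF subH Zm])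
  have subJ1H: "subalgebra ?J1 H" using HJ subH
    by (simp add: subalgebra_def joinsig_space[OF subF Zm])
  have subJ2F: "subalgebra ?J2 F" using FH joinsig_F[OF subH Zm] subF
    by (auto simp: subalgebra_def joinsig_space[OF subH Zm])
  have subHF: "subalgebra H F" using FH subF subH by (auto simp: subalgebra_def)
  interpret J2: sigma_finite_subalgebra M ?J2 by (rule sfs[OF prob subJ2])
  interpret H: sigma_finite_subalgebra M H by (rule sfs[OF prob subH])
  interpret F: sigma_finite_subalgebra M F by (rule sfs[OF prob subF])
  have "\<forall>A\<in>sets MX. AE \<omega> in M. real_cond_exp M ?J2 (\<lambda>\<eta>. indicator A (X \<eta>)) \<omega>
                  = real_cond_exp M H (\<lambda>\<eta>. indicator A (X \<eta>)) \<omega>"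
  proof
    fix A assume A[measurable]: "A \<in> sets MX"
    define f where "f = (\<lambda>\<eta>. indicator A (X \<eta>) :: real)"
    define p where "p = real_cond_exp M F f"
    have fm[measurable]: "f \<in> borel_measurable M" unfolding f_def by measurable
    have fi: "integrable M f" by (rule integrable_const_bound[where B=1]) (auto simp: f_def)
    have pi: "integrable M p" unfolding p_def by (rule F.real_cond_exp_int(1)[OF fi])
    have pF: "p \<in> borel_measurable F" unfolding p_def by simp
    have pM: "p \<in> borel_measurable M" by (rule measurable_from_subalg[OF subF pF])
    have pJ2: "p \<in> borel_measurable ?J2" by (rule measurable_from_subalg[OF subJ2F pF])
    have pH: "p \<in> borel_measurable H" by (rule measurable_from_subalg[OF subHF pF])
    have h1: "AE \<omega> in M. real_cond_exp M ?J1 f \<omega> = p \<omega>"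
      unfolding f_def p_def by (rule char1[OF prob Zm Xm subF ci' A])
    have e1M: "real_cond_exp M ?J1 f \<in> borel_measurable M" by simp
    have a1: "AE \<omega> in M. real_cond_exp M ?J2 f \<omega> = p \<omega>"
    proof -
      have "AE x in M. real_cond_exp M ?J2 (real_cond_exp M ?J1 f) x = real_cond_exp M ?J2 f x"
        by (rule J2.real_cond_exp_nested_subalg[OF subJ1 subJ1J2 fi])
      moreover have "AE x in M. real_cond_exp M ?J2 (real_cond_exp M ?J1 f) x = real_cond_exp M ?J2 p x"
        by (rule J2.real_cond_exp_cong[OF h1 e1M pM])
      moreover have "AE x in M. real_cond_exp M ?J2 p x = p x"
        by (rule J2.real_cond_exp_F_meas[OF pi pJ2])
      ultimately show ?thesis by eventually_elim auto
    qed
    have a2: "AE \<omega> in M. real_cond_exp M H f \<omega> = p \<omega>"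
    proof -
      have "AE x in M. real_cond_exp M H (real_cond_exp M ?J1 f) x = real_cond_exp M H f x"
        by (rule H.real_cond_exp_nested_subalg[OF subJ1 subJ1H fi])
      moreover have "AE x in M. real_cond_exp M H (real_cond_exp M ?J1 f) x = real_cond_exp M H p x"
        by (rule H.real_cond_exp_cong[OF h1 e1M pM])
      moreover have "AE x in M. real_cond_exp M H p x = p x"
        by (rule H.real_cond_exp_F_meas[OF pi pH])
      ultimately show ?thesis by eventually_elim auto
    qed
    show "AE \<omega> in M. real_cond_exp M ?J2 (\<lambda>\<eta>. indicator A (X \<eta>)) \<omega>
                  = real_cond_exp M H (\<lambda>\<eta>. indicator A (X \<eta>)) \<omega>"
      using a1 a2 unfolding f_def by eventually_elim auto
  qed
  then have "cond_indep M H Z MZ X MX" by (rule char2[OF prob Zm Xm subH])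
  then show ?thesis by (rule ci_sym)
qed

lemma ci_shift:
  assumes prob: "prob_space M" and Xm[measurable]: "X \<in> measurable M MX" and Zm[measurable]: "Z \<in> measurable M MZ"
    and subH: "subalgebra M H" and ci: "cond_indep M H X MX Z MZ"
    and X'J: "X' \<in> measurable (joinsig M X MX H) MX'" and X'm: "X' \<in> measurable M MX'"
  shows "cond_indep M H X' MX' Z MZ"
proof (rule char2[OF prob X'm Zm subH], intro ballI)
  interpret prob_space M by fact
  let ?J = "joinsig M X MX H" and ?J' = "joinsig M X' MX' H"
  have subJ: "subalgebra M ?J" by (rule joinsig_subalg[OF subH Xm])
  have subJ': "subalgebra M ?J'" by (rule joinsig_subalg[OF subH X'm])
  have J'J: "sets ?J' \<subseteq> sets ?J"
    by (rule joinsig_le[OF subH X'm X'J joinsig_space[OF subH Xm] joinsig_F[OF subH Xm]])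
  have subJJ': "subalgebra ?J ?J'" using J'J
    by (simp add: subalgebra_def joinsig_space[OF subH Xm] joinsig_space[OF subH X'm])
  interpret J': sigma_finite_subalgebra M ?J' by (rule sfs[OF prob subJ'])
  interpret H: sigma_finite_subalgebra M H by (rule sfs[OF prob subH])
  fix B assume B[measurable]: "B \<in> sets MZ"
  define f where "f = (\<lambda>\<eta>. indicator B (Z \<eta>) :: real)"
  define q where "q = real_cond_exp M H f"
  have fm[measurable]: "f \<in> borel_measurable M" unfolding f_def by measurable
  have fi: "integrable M f" by (rule integrable_const_bound[where B=1]) (auto simp: f_def)
  have qi: "integrable M q" unfolding q_def by (rule H.real_cond_exp_int(1)[OF fi])
  have qH: "q \<in> borel_measurable H" unfolding q_def by simp
  have qM: "q \<in> borel_measurable M" by (rule measurable_from_subalg[OF subH qH])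
  have qJ': "q \<in> borel_measurable ?J'" by (rule measurable_from_subalg[OF joinsig_subalg_F[OF subH X'm] qH])
  have h1: "AE \<omega> in M. real_cond_exp M ?J f \<omega> = q \<omega>"
    unfolding f_def q_def by (rule char1[OF prob Xm Zm subH ci B])
  have e1M: "real_cond_exp M ?J f \<in> borel_measurable M" by simp
  have "AE x in M. real_cond_exp M ?J' (real_cond_exp M ?J f) x = real_cond_exp M ?J' f x"
    by (rule J'.real_cond_exp_nested_subalg[OF subJ subJJ' fi])
  moreover have "AE x in M. real_cond_exp M ?J' (real_cond_exp M ?J f) x = real_cond_exp M ?J' q x"
    by (rule J'.real_cond_exp_cong[OF h1 e1M qM])
  moreover have "AE x in M. real_cond_exp M ?J' q x = q x"
    by (rule J'.real_cond_exp_F_meas[OF qi qJ'])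
  ultimately show "AE \<omega> in M. real_cond_exp M ?J' (\<lambda>\<eta>. indicator B (Z \<eta>)) \<omega>
                  = real_cond_exp M H (\<lambda>\<eta>. indicator B (Z \<eta>)) \<omega>"
    unfolding f_def q_def by eventually_elim auto
qed



theorem lemma3p4:
  fixes M :: "'w measure"
    and S :: "nat \<Rightarrow> 'w \<Rightarrow> real^'p"
    and A :: "nat \<Rightarrow> 'w \<Rightarrow> nat"
    and Sset :: "(real^'p) set"
    and K :: nat
    and U :: "real^'p \<Rightarrow> nat \<Rightarrow> real^'p \<Rightarrow> real"
    and Mb :: real
    and P :: "nat \<Rightarrow> real^'p \<Rightarrow> (real^'p) set \<Rightarrow> real"
    and Sstar :: "nat \<Rightarrow> nat list \<Rightarrow> 'w \<Rightarrow> real^'p"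
    and \<epsilon> :: real
    and \<phi> :: "real^'p \<Rightarrow> real^'q"
    and t :: nat
  assumes prob: "prob_space M"
    and S_meas: "\<And>i. S i \<in> borel_measurable M"
    and S_int: "\<And>i. integrable M (S i)"
    and S_in: "\<And>i \<omega>. \<omega> \<in> space M \<Longrightarrow> S i \<omega> \<in> Sset"
    and A_meas: "\<And>i. A i \<in> measurable M (count_space UNIV)"
    and A_in: "\<And>i \<omega>. \<omega> \<in> space M \<Longrightarrow> A i \<omega> \<in> {1..K}"
    and U_meas: "(\<lambda>(s, a, s'). U s a s') \<in> borel_measurable (borel \<Otimes>\<^sub>M count_space UNIV \<Otimes>\<^sub>M borel)"
    and U_bdd: "AE \<omega> in M. \<forall>i. \<bar>U (S i \<omega>) (A i \<omega>) (S (Suc i) \<omega>)\<bar> \<le> Mb"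
    \<comment> \<open>(A0): Markov property with time-homogeneous transition kernel P\<close>
    and A0: "\<And>i G. 1 \<le> i \<Longrightarrow> G \<in> sets borel \<Longrightarrow>
              AE \<omega> in M. real_cond_exp M (hist_sigma M S A i i) (\<lambda>\<eta>. indicator G (S (Suc i) \<eta>)) \<omega>
                            = P (A i \<omega>) (S i \<omega>) G"
    \<comment> \<open>potential states\<close>
    and Sstar_meas: "\<And>s abar. Sstar s abar \<in> borel_measurable M"
    \<comment> \<open>(C1) consistency\<close>
    and C1: "\<And>i. 1 \<le> i \<Longrightarrow> AE \<omega> in M. S i \<omega> = Sstar i (map (\<lambda>j. A j \<omega>) [1..<i]) \<omega>"
    \<comment> \<open>(C2) positivity\<close>
    and eps_pos: "\<epsilon> > 0"
    and C2: "\<And>i a. 1 \<le> i \<Longrightarrow> a \<in> {1..K} \<Longrightarrow>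
              AE \<omega> in M. real_cond_exp M (hist_sigma M S A i (i - 1)) (\<lambda>\<eta>. indicator {a} (A i \<eta>)) \<omega> \<ge> \<epsilon>"
    \<comment> \<open>(C3) sequential ignorability\<close>
    and C3: "\<And>i. 1 \<le> i \<Longrightarrow>
              cond_indep M (hist_sigma M S A i (i - 1))
                (\<lambda>\<omega>. \<lambda>k\<in>pot_index K. Sstar (fst k) (snd k) \<omega>) (Pi\<^sub>M (pot_index K) (\<lambda>_. borel))
                (A i) (count_space UNIV)"
    and phi_meas: "\<phi> \<in> borel_measurable (restrict_space borel Sset)"
    and t_pos: "1 \<le> t"
    and alt: "cond_indep M (gen_sigma M (A t) (count_space UNIV))
                (\<lambda>\<omega>. (U (S t \<omega>) (A t \<omega>) (S (Suc t) \<omega>), S (Suc t) \<omega>)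
                   - cond_exp_vec M (gen_sigma M (\<lambda>\<eta>. (\<phi> (S t \<eta>), A t \<eta>)) (borel \<Otimes>\<^sub>M count_space UNIV))
                       (\<lambda>\<eta>. (U (S t \<eta>) (A t \<eta>) (S (Suc t) \<eta>), S (Suc t) \<eta>)) \<omega>) borel
                (S t) borel
            \<or> cond_indep M (gen_sigma M (A t) (count_space UNIV))
                (\<lambda>\<omega>. S t \<omega> - cond_exp_vec M (gen_sigma M (\<lambda>\<eta>. \<phi> (S t \<eta>)) borel) (S t) \<omega>) borel
                (\<lambda>\<omega>. ((U (S t \<omega>) (A t \<omega>) (S (Suc t) \<omega>), S (Suc t) \<omega>), \<phi> (S t \<omega>))) borel"
  shows "cond_indep M (gen_sigma M (\<lambda>\<omega>. (\<phi> (S t \<omega>), A t \<omega>)) (borel \<Otimes>\<^sub>M count_space UNIV))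
           (\<lambda>\<omega>. (U (S t \<omega>) (A t \<omega>) (S (Suc t) \<omega>), S (Suc t) \<omega>)) borel
           (S t) borel"
proof -
  interpret prob_space M by (rule prob)
  have St[measurable]: "S t \<in> borel_measurable M" by (rule S_meas)
  have SSt[measurable]: "S (Suc t) \<in> borel_measurable M" by (rule S_meas)
  have At[measurable]: "A t \<in> measurable M (count_space UNIV)" by (rule A_meas)
  have phi_comp: "(\<lambda>\<omega>. \<phi> (S t \<omega>)) \<in> borel_measurable N"
    if "S t \<in> borel_measurable N" "space N = space M" for N :: "'w measure"
  proof -
    have "S t \<in> measurable N (restrict_space borel Sset)"
      by (rule measurable_restrict_space2) (use that S_in in auto)
    from measurable_compose[OF this phi_meas] show ?thesis by simp
  qed
  have phiS: "(\<lambda>\<omega>. \<phi> (S t \<omega>)) \<in> borel_measurable M" by (rule phi_comp[OF St refl])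
  have Um: "(\<lambda>\<omega>. U (S t \<omega>) (A t \<omega>) (S (Suc t) \<omega>)) \<in> borel_measurable M"
  proof -
    have "(\<lambda>\<omega>. (S t \<omega>, A t \<omega>, S (Suc t) \<omega>)) \<in> measurable M (borel \<Otimes>\<^sub>M count_space UNIV \<Otimes>\<^sub>M borel)"
      by measurable
    from measurable_compose[OF this U_meas] show ?thesis by simp
  qed
  have Ym: "(\<lambda>\<omega>. (U (S t \<omega>) (A t \<omega>) (S (Suc t) \<omega>), S (Suc t) \<omega>)) \<in> borel_measurable M"
  proof -
    have "(\<lambda>\<omega>. (U (S t \<omega>) (A t \<omega>) (S (Suc t) \<omega>), S (Suc t) \<omega>)) \<in> measurable M (borel \<Otimes>\<^sub>M borel)"
      using Um SSt by (rule measurable_Pair)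
    then show ?thesis by (simp add: borel_prod)
  qed
  let ?Y = "\<lambda>\<omega>. (U (S t \<omega>) (A t \<omega>) (S (Suc t) \<omega>), S (Suc t) \<omega>)"
  let ?W = "\<lambda>\<omega>. (\<phi> (S t \<omega>), A t \<omega>)"
  let ?H = "gen_sigma M ?W (borel \<Otimes>\<^sub>M count_space UNIV)"
  let ?F = "gen_sigma M (A t) (count_space UNIV)"
  have Wm: "?W \<in> measurable M (borel \<Otimes>\<^sub>M count_space UNIV)"
    using phiS At by (rule measurable_Pair)
  have subH: "subalgebra M ?H" by (rule gen_sigma_subalg[OF Wm])
  have subF: "subalgebra M ?F" by (rule gen_sigma_subalg[OF At])
  have WH: "?W \<in> measurable ?H (borel \<Otimes>\<^sub>M count_space UNIV)" by (rule gen_sigma_meas[OF Wm])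
  have AH: "A t \<in> measurable ?H (count_space UNIV)"
    using measurable_compose[OF WH measurable_snd] by simp
  have phiH: "(\<lambda>\<omega>. \<phi> (S t \<omega>)) \<in> borel_measurable ?H"
    using measurable_compose[OF WH measurable_fst] by simp
  have FH: "sets ?F \<subseteq> sets ?H" by (rule gen_sigma_le[OF At AH gen_sigma_space])
  have fstm: "fst \<in> measurable (borel :: ((real \<times> (real^'p)) \<times> (real^'q)) measure) borel"
    using measurable_fst [of "borel :: (real \<times> (real^'p)) measure" "borel :: (real^'q) measure"]
    by (simp add: borel_prod)
  show ?thesis
    using alt
  proof
    let ?V = "cond_exp_vec M ?H ?Y"
    let ?R = "\<lambda>\<omega>. ?Y \<omega> - ?V \<omega>"
    assume hyp: "cond_indep M ?F ?R borel (S t) borel"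
    have VH: "?V \<in> borel_measurable ?H" unfolding cond_exp_vec_def by measurable
    have VM: "?V \<in> borel_measurable M" by (rule measurable_from_subalg[OF subH VH])
    have Rm: "?R \<in> borel_measurable M" using Ym VM by (rule borel_measurable_diff)
    let ?J = "joinsig M (S t) borel ?F"
    have SJ: "S t \<in> borel_measurable ?J" by (rule joinsig_X[OF subF St])
    have AJ: "A t \<in> measurable ?J (count_space UNIV)"
      by (rule measurable_from_subalg[OF joinsig_subalg_F[OF subF St] gen_sigma_meas[OF At]])
    have WJ: "?W \<in> measurable ?J (borel \<Otimes>\<^sub>M count_space UNIV)"
      using phi_comp[OF SJ joinsig_space[OF subF St]] AJ by (rule measurable_Pair)
    have HJ: "sets ?H \<subseteq> sets ?J" by (rule gen_sigma_le[OF Wm WJ joinsig_space[OF subF St]])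
    have ci1: "cond_indep M ?H ?R borel (S t) borel"
      by (rule ci_weak_union[OF prob Rm St subF subH FH HJ hyp])
    let ?JR = "joinsig M ?R borel ?H"
    have RJ: "?R \<in> borel_measurable ?JR" by (rule joinsig_X[OF subH Rm])
    have VJ: "?V \<in> borel_measurable ?JR"
      by (rule measurable_from_subalg[OF joinsig_subalg_F[OF subH Rm] VH])
    have "(\<lambda>\<omega>. ?R \<omega> + ?V \<omega>) \<in> borel_measurable ?JR" using RJ VJ by (rule borel_measurable_add)
    then have YJ: "?Y \<in> borel_measurable ?JR" by simp
    show ?thesis by (rule ci_shift[OF prob Rm St subH ci1 YJ Ym])
  next
    let ?G2 = "gen_sigma M (\<lambda>\<eta>. \<phi> (S t \<eta>)) borel"
    let ?V = "cond_exp_vec M ?G2 (S t)"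
    let ?R = "\<lambda>\<omega>. S t \<omega> - ?V \<omega>"
    let ?Z = "\<lambda>\<omega>. (?Y \<omega>, \<phi> (S t \<omega>))"
    assume hyp: "cond_indep M ?F ?R borel ?Z borel"
    have subG2: "subalgebra M ?G2" by (rule gen_sigma_subalg[OF phiS])
    have G2H: "sets ?G2 \<subseteq> sets ?H" by (rule gen_sigma_le[OF phiS phiH gen_sigma_space])
    have subHG2: "subalgebra ?H ?G2" using G2H by (simp add: subalgebra_def gen_sigma_space)
    have VG2: "?V \<in> borel_measurable ?G2" unfolding cond_exp_vec_def by measurable
    have VH: "?V \<in> borel_measurable ?H" by (rule measurable_from_subalg[OF subHG2 VG2])
    have VM: "?V \<in> borel_measurable M" by (rule measurable_from_subalg[OF subH VH])
    have Rm: "?R \<in> borel_measurable M" using St VM by (rule borel_measurable_diff)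
    have Zm: "?Z \<in> borel_measurable M"
    proof -
      have "?Z \<in> measurable M (borel \<Otimes>\<^sub>M borel)" using Ym phiS by (rule measurable_Pair)
      then show ?thesis by (simp add: borel_prod)
    qed
    let ?J = "joinsig M ?Z borel ?F"
    have ZJ: "?Z \<in> measurable ?J (borel \<Otimes>\<^sub>M borel)"
      using joinsig_X[OF subF Zm] by (simp add: borel_prod)
    have phiJ: "(\<lambda>\<omega>. \<phi> (S t \<omega>)) \<in> borel_measurable ?J"
      using measurable_compose[OF ZJ measurable_snd] by simp
    have AJ: "A t \<in> measurable ?J (count_space UNIV)"
      by (rule measurable_from_subalg[OF joinsig_subalg_F[OF subF Zm] gen_sigma_meas[OF At]])
    have WJ: "?W \<in> measurable ?J (borel \<Otimes>\<^sub>M count_space UNIV)"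
      using phiJ AJ by (rule measurable_Pair)
    have HJ: "sets ?H \<subseteq> sets ?J" by (rule gen_sigma_le[OF Wm WJ joinsig_space[OF subF Zm]])
    have ci1: "cond_indep M ?H ?R borel ?Z borel"
      by (rule ci_weak_union[OF prob Rm Zm subF subH FH HJ hyp])
    have ci2: "cond_indep M ?H ?R borel ?Y borel"
      using ci_decomp[OF ci1 fstm] by simp
    let ?JR = "joinsig M ?R borel ?H"
    have RJ: "?R \<in> borel_measurable ?JR" by (rule joinsig_X[OF subH Rm])
    have VJ: "?V \<in> borel_measurable ?JR"
      by (rule measurable_from_subalg[OF joinsig_subalg_F[OF subH Rm] VH])
    have "(\<lambda>\<omega>. ?R \<omega> + ?V \<omega>) \<in> borel_measurable ?JR" using RJ VJ by (rule borel_measurable_add)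
    then have SJ: "S t \<in> borel_measurable ?JR" by simp
    have ci3: "cond_indep M ?H (S t) borel ?Y borel"
      by (rule ci_shift[OF prob Rm Ym subH ci2 SJ St])
    show ?thesis by (rule ci_sym[OF ci3])
  qed
qed

end
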